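(* Let $\mathcal{S}$ be a finite set of states, for each $s\in\mathcal{S}$ let $\mathcal{A}(s)$ be a finite nonempty set of actions, and let $\mathcal{P}:=\{(s,a): s\in\mathcal{S}, a\in\mathcal{A}(s)\}$ be the (finite) set of state-action pairs. Let $\mu,\mu'\in(\mathbb{R}_{>0})^{\mathcal{P}}$ be two fully supported measures on $\mathcal{P}$ and let $\pi(\mu),\pi(\mu')$ be their induced policies. If $\|\mu'-\mu\|_\infty\le \epsilon\,\min(\mu)$ for some $\epsilon<(2|\mathcal{P}|)^{-1}$, then $$\|\pi(\mu')-\pi(\mu)\|_\infty:=\max_{(s,a)\in\mathcal{P}}\bigl|\pi(\mu')(a|s)-\pi(\mu)(a|s)\bigr|\le 4\epsilon.$$
   Context: For a fully supported measure $\mu$ on $\mathcal{P}$, write $\mu(s):=\sum_{a\in\mathcal{A}(s)}\mu(s,a)$; the policy induced by $\mu$ is the randomized policy $\pi(\mu)(a|s):=\mu(s,a)/\mu(s)$ for $(s,a)\in\mathcal{P}$. Here $\min(\mu):=\min_{z\in\mathcal{P}}\mu(z)$, $\|\mu'-\mu\|_\infty:=\max_{z\in\mathcal{P}}|\mu'(z)-\mu(z)|$, and $|\mathcal{P}|$ is the number of state-action pairs. *)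

theory Defs
  imports Main Complex_Main
begin

definition pairs :: "'s set \<Rightarrow> ('s \<Rightarrow> 'a set) \<Rightarrow> ('s \<times> 'a) set" where
  "pairs S A = Sigma S A"

definition state_measure :: "('s \<Rightarrow> 'a set) \<Rightarrow> ('s \<times> 'a \<Rightarrow> real) \<Rightarrow> 's \<Rightarrow> real" where
  "state_measure A \<mu> s = (\<Sum>a\<in>A s. \<mu> (s, a))"

definition induced_policy :: "('s \<Rightarrow> 'a set) \<Rightarrow> ('s \<times> 'a \<Rightarrow> real) \<Rightarrow> 's \<times> 'a \<Rightarrow> real" where
  "induced_policy A \<mu> z = \<mu> z / state_measure A \<mu> (fst z)"

definition min_on :: "('s \<times> 'a) set \<Rightarrow> ('s \<times> 'a \<Rightarrow> real) \<Rightarrow> real" where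
  "min_on P \<mu> = Min (\<mu> ` P)"

definition sup_dist :: "('s \<times> 'a) set \<Rightarrow> ('s \<times> 'a \<Rightarrow> real) \<Rightarrow> ('s \<times> 'a \<Rightarrow> real) \<Rightarrow> real" where
  "sup_dist P f g = Max ((\<lambda>z. \<bar>f z - g z\<bar>) ` P)"

end

theory Submission
  imports Defs
begin

lemma core:
  fixes x y X Y n m e :: real
  assumes "x>0" "y>0" "X>0" "Y>0" "n\<ge>1" "m>0" "0\<le>e" "e<1/2"
   "\<bar>x-y\<bar>\<le>e*m" "\<bar>X-Y\<bar>\<le>n*e*m" "y\<le>Y" "Y\<ge>n*m"
  shows "\<bar>x/X - y/Y\<bar> \<le> 4*e"
proof -
  have eq: "x/X - y/Y = ((x-y) + (y/Y)*(Y-X))/X" using assms by (simp add: field_simps)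
  have r: "0 \<le> y/Y" "y/Y \<le> 1" using assms by auto
  have "\<bar>(y/Y)*(Y-X)\<bar> \<le> n*e*m"
  proof -
    have "\<bar>(y/Y)*(Y-X)\<bar> = (y/Y)*\<bar>X-Y\<bar>" using r assms by (simp add: abs_mult abs_minus_commute)
    also have "\<dots> \<le> 1*\<bar>X-Y\<bar>" using r by (intro mult_right_mono) auto
    finally show ?thesis using assms by simp
  qed
  hence num: "\<bar>(x-y) + (y/Y)*(Y-X)\<bar> \<le> (1+n)*e*m" using assms(9) abs_triangle_ineq[of "x-y" "(y/Y)*(Y-X)"] by (simp add: algebra_simps)
  have Xl: "X \<ge> n*m*(1-e)" using assms by (simp add: algebra_simps)
  have Xl2: "X \<ge> n*m/2" proof -
    have "n*m*(1/2) \<le> n*m*(1-e)" using assms by (intro mult_left_mono) auto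
    thus ?thesis using Xl by simp
  qed
  have "\<bar>x/X - y/Y\<bar> = \<bar>(x-y) + (y/Y)*(Y-X)\<bar>/X" using eq assms by simp
  also have "\<dots> \<le> (1+n)*e*m / X" using num assms by (simp add: divide_right_mono)
  also have "\<dots> \<le> (1+n)*e*m / (n*m/2)" using Xl2 assms
    by (intro divide_left_mono) auto
  also have "\<dots> = 2*e*(1+n)/n" using assms by (simp add: field_simps)
  also have "\<dots> \<le> 2*e*(2*n)/n" using assms by (intro divide_right_mono mult_left_mono) auto
  also have "\<dots> = 4*e" using assms by simp
  finally show ?thesis .
qed

theorem mainTheorem1:
  fixes S :: "'s set" and A :: "'s \<Rightarrow> 'a set"
    and \<mu> \<mu>' :: "'s \<times> 'a \<Rightarrow> real" and \<epsilon> :: real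
  assumes "finite S" and "S \<noteq> {}"
    and "\<And>s. s \<in> S \<Longrightarrow> finite (A s) \<and> A s \<noteq> {}"
    and "\<And>z. z \<in> pairs S A \<Longrightarrow> \<mu> z > 0"
    and "\<And>z. z \<in> pairs S A \<Longrightarrow> \<mu>' z > 0"
    and "\<epsilon> < 1 / (2 * real (card (pairs S A)))"
    and "sup_dist (pairs S A) \<mu>' \<mu> \<le> \<epsilon> * min_on (pairs S A) \<mu>"
  shows "sup_dist (pairs S A) (induced_policy A \<mu>') (induced_policy A \<mu>) \<le> 4 * \<epsilon>"
proof -
  let ?P = "pairs S A"
  define m where "m = min_on ?P \<mu>"
  have finP: "finite ?P" using assms(1,3) by (simp add: pairs_def)
  have neP: "?P \<noteq> {}" using assms(2,3) by (auto simp: pairs_def)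
  have mle: "\<And>z. z \<in> ?P \<Longrightarrow> m \<le> \<mu> z" unfolding m_def min_on_def using finP by simp
  have mpos: "m > 0" unfolding m_def min_on_def using finP neP assms(4) by simp
  have dz: "\<And>z. z \<in> ?P \<Longrightarrow> \<bar>\<mu>' z - \<mu> z\<bar> \<le> \<epsilon> * m"
  proof -
    fix z assume "z \<in> ?P"
    hence "\<bar>\<mu>' z - \<mu> z\<bar> \<le> sup_dist ?P \<mu>' \<mu>" unfolding sup_dist_def using finP by simp
    thus "\<bar>\<mu>' z - \<mu> z\<bar> \<le> \<epsilon> * m" using assms(7) m_def by simp
  qed
  obtain z0 where z0: "z0 \<in> ?P" using neP by blast
  have e0: "0 \<le> \<epsilon>"
  proof (rule ccontr)
    assume "\<not> 0 \<le> \<epsilon>"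
    hence "\<epsilon> * m < 0" using mpos by (simp add: mult_neg_pos)
    thus False using dz[OF z0] by simp
  qed
  have c1: "card ?P \<ge> 1" using finP neP by (simp add: Suc_le_eq card_gt_0_iff)
  have "1 / (2 * real (card ?P)) \<le> 1/2" using c1 by (simp add: field_simps)
  hence e2: "\<epsilon> < 1/2" using assms(6) by linarith
  show ?thesis unfolding sup_dist_def
  proof (subst Max_le_iff)
    show "finite ((\<lambda>z. \<bar>induced_policy A \<mu>' z - induced_policy A \<mu> z\<bar>) ` ?P)" using finP by simp
    show "(\<lambda>z. \<bar>induced_policy A \<mu>' z - induced_policy A \<mu> z\<bar>) ` ?P \<noteq> {}" using neP by simp
    show "\<forall>a\<in>(\<lambda>z. \<bar>induced_policy A \<mu>' z - induced_policy A \<mu> z\<bar>) ` ?P. a \<le> 4 * \<epsilon>"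
    proof
      fix r assume "r \<in> (\<lambda>z. \<bar>induced_policy A \<mu>' z - induced_policy A \<mu> z\<bar>) ` ?P"
      then obtain s a where sa: "(s,a) \<in> ?P" and r: "r = \<bar>induced_policy A \<mu>' (s,a) - induced_policy A \<mu> (s,a)\<bar>" by auto
      have s: "s \<in> S" "a \<in> A s" using sa by (auto simp: pairs_def)
      have fA: "finite (A s)" "A s \<noteq> {}" using assms(3) s by auto
      have inP: "\<And>b. b \<in> A s \<Longrightarrow> (s,b) \<in> ?P" using s by (auto simp: pairs_def)
      define n where "n = real (card (A s))"
      have n1: "n \<ge> 1" using fA by (simp add: n_def Suc_le_eq card_gt_0_iff)
      have Ypos: "state_measure A \<mu> s > 0" unfolding state_measure_def
        using fA inP assms(4) by (intro sum_pos) auto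
      have Xpos: "state_measure A \<mu>' s > 0" unfolding state_measure_def
        using fA inP assms(5) by (intro sum_pos) auto
      have yY: "\<mu> (s,a) \<le> state_measure A \<mu> s" unfolding state_measure_def
        using fA s inP assms(4) by (intro member_le_sum) (auto intro: less_imp_le)
      have Ynm: "n * m \<le> state_measure A \<mu> s" unfolding state_measure_def n_def
        using sum_bounded_below[of "A s" m "\<lambda>b. \<mu> (s,b)"] mle inP by auto
      have "\<bar>state_measure A \<mu>' s - state_measure A \<mu> s\<bar> = \<bar>\<Sum>b\<in>A s. \<mu>' (s,b) - \<mu> (s,b)\<bar>"
        unfolding state_measure_def by (simp add: sum_subtractf)
      also have "\<dots> \<le> (\<Sum>b\<in>A s. \<bar>\<mu>' (s,b) - \<mu> (s,b)\<bar>)" by (rule sum_abs)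
      also have "\<dots> \<le> n * (\<epsilon> * m)" unfolding n_def
        using sum_bounded_above[of "A s" "\<lambda>b. \<bar>\<mu>' (s,b) - \<mu> (s,b)\<bar>" "\<epsilon> * m"] dz inP by auto
      finally have dXY: "\<bar>state_measure A \<mu>' s - state_measure A \<mu> s\<bar> \<le> n * \<epsilon> * m" by (simp add: mult.assoc)
      have "r \<le> 4 * \<epsilon>" unfolding r induced_policy_def fst_conv
        by (rule core[OF assms(5)[OF sa] assms(4)[OF sa] Xpos Ypos n1 mpos e0 e2 dz[OF sa] dXY yY Ynm])
      thus "r \<le> 4 * \<epsilon>" .
    qed
  qed
qed

end
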